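(* Let $H\in M_d(\mathbb{C})$ be Hermitian with non-degenerate spectrum and orthonormal eigenbasis $\{|j\rangle\}_{j=1}^d$, and let $\mathbb{G}_0[X]=\sum_{j=1}^d\langle j|X|j\rangle\,|j\rangle\langle j|$. Let $\mathbb{D}[\rho]=\sum_\alpha\big(h_\alpha\rho h_\alpha^\dagger-\tfrac12\{h_\alpha^\dagger h_\alpha,\rho\}\big)$ with $h_\alpha\in M_d(\mathbb{C})$, and set $\widehat{\mathbb{D}}=\mathbb{G}_0\circ\mathbb{D}\circ\mathbb{G}_0$. Then $\widehat{\mathbb{D}}$ generates a semigroup $e^{t\widehat{\mathbb{D}}}$, $t\ge0$, of positive, trace-preserving maps on the set of density matrices commuting with $H$ (i.e. density matrices of the form $\sum_j\rho_{jj}|j\rangle\langle j|$): for every such density matrix $\rho$ and every $t\ge0$, $e^{t\widehat{\mathbb{D}}}[\rho]$ is again a density matrix commuting with $H$.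
   Context: $\mathbb{G}_0$ is the time average of the unitary evolution $\rho\mapsto e^{-itH}\rho e^{itH}$, i.e. the projection onto the diagonal part in the eigenbasis of $H$; the density matrices commuting with $H$ are exactly the states invariant under that unitary evolution. *)

theory Defs
  imports "HOL-Analysis.Analysis"
begin

text \<open>Matrices in M_d(C) are rendered as complex^'n^'n, with d = CARD('n).\<close>

definition cadj :: "complex^'n^'n \<Rightarrow> complex^'n^'n" where
  "cadj M = (\<chi> i j. cnj (M $ j $ i))"

definition hermitian :: "complex^'n^'n \<Rightarrow> bool" where
  "hermitian M \<longleftrightarrow> cadj M = M"

text \<open>inner product <v|w>, linear in the second argument\<close>
definition braket :: "complex^'n \<Rightarrow> complex^'n \<Rightarrow> complex" where
  "braket v w = (\<Sum>i\<in>UNIV. cnj (v $ i) * w $ i)"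

text \<open>outer product |v><w|\<close>
definition ketbra :: "complex^'n \<Rightarrow> complex^'n \<Rightarrow> complex^'n^'n" where
  "ketbra v w = (\<chi> i k. v $ i * cnj (w $ k))"

definition csmat :: "complex \<Rightarrow> complex^'n^'n \<Rightarrow> complex^'n^'n" where
  "csmat c M = (\<chi> i k. c * M $ i $ k)"

definition orthonormal_basis :: "('n \<Rightarrow> complex^'n) \<Rightarrow> bool" where
  "orthonormal_basis e \<longleftrightarrow> (\<forall>j k. braket (e j) (e k) = (if j = k then 1 else 0))"

text \<open>positive semidefinite: <v|M|v> is real and nonnegative for all v\<close>
definition psd :: "complex^'n^'n \<Rightarrow> bool" where
  "psd M \<longleftrightarrow> hermitian M \<and> (\<forall>v. Im (braket v (M *v v)) = 0 \<and> Re (braket v (M *v v)) \<ge> 0)"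

definition density_matrix :: "complex^'n^'n \<Rightarrow> bool" where
  "density_matrix \<rho> \<longleftrightarrow> psd \<rho> \<and> trace \<rho> = 1"

text \<open>G_0[X] = sum_j <j|X|j> |j><j|\<close>
definition G0 :: "('n \<Rightarrow> complex^'n) \<Rightarrow> complex^'n^'n \<Rightarrow> complex^'n^'n" where
  "G0 e X = (\<Sum>j\<in>UNIV. csmat (braket (e j) (X *v e j)) (ketbra (e j) (e j)))"

text \<open>Lindblad dissipator with a finite family of jump operators h indexed by A\<close>
definition dissipator :: "'a set \<Rightarrow> ('a \<Rightarrow> complex^'n^'n) \<Rightarrow> complex^'n^'n \<Rightarrow> complex^'n^'n" where
  "dissipator A h \<rho> = (\<Sum>\<alpha>\<in>A. h \<alpha> ** \<rho> ** cadj (h \<alpha>)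
      - (1/2::real) *\<^sub>R (cadj (h \<alpha>) ** h \<alpha> ** \<rho> + \<rho> ** (cadj (h \<alpha>) ** h \<alpha>)))"

text \<open>exponential of a linear superoperator L: e^{tL}[X] = sum_n t^n/n! L^n[X]\<close>
definition super_exp :: "real \<Rightarrow> (complex^'n^'n \<Rightarrow> complex^'n^'n) \<Rightarrow> complex^'n^'n \<Rightarrow> complex^'n^'n" where
  "super_exp t L X = (\<Sum>n. (t ^ n / fact n) *\<^sub>R (L ^^ n) X)"

end

theory Submission imports Defs begin

lemma iter_bound:
  fixes f :: "'a::real_normed_vector \<Rightarrow> 'a"
  assumes "bounded_linear f"
  obtains K where "K > 0" "\<And>n x. norm ((f^^n) x) \<le> K^n * norm x"
proof -
  obtain K where K: "K > 0" "\<And>x. norm (f x) \<le> norm x * K"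
    using bounded_linear.pos_bounded[OF assms] by blast
  have "norm ((f^^n) x) \<le> K^n * norm x" for n x
  proof (induction n)
    case 0 then show ?case by simp
  next
    case (Suc n)
    have "norm ((f^^Suc n) x) \<le> norm ((f^^n) x) * K" using K(2) by simp
    also have "\<dots> \<le> K^n * norm x * K" using Suc K(1) by (simp add: mult_right_mono)
    finally show ?case by (simp add: algebra_simps)
  qed
  with K(1) show ?thesis using that by blast
qed

lemma summable_norm_series:
  fixes f :: "'a::real_normed_vector \<Rightarrow> 'a"
  assumes "bounded_linear f"
  shows "summable (\<lambda>n. norm ((t^n / fact n) *\<^sub>R (f^^n) x))"
proof -
  obtain K where K: "K > 0" "\<And>n x. norm ((f^^n) x) \<le> K^n * norm x"
    using iter_bound[OF assms] by blast
  have s: "summable (\<lambda>n. norm x * (inverse (fact n) * (\<bar>t\<bar> * K)^n))"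
    by (intro summable_mult summable_exp)
  show ?thesis
  proof (rule summable_comparison_test[OF _ s], intro exI allI impI)
    fix n :: nat
    have "norm (norm ((t^n / fact n) *\<^sub>R (f^^n) x)) = \<bar>t\<bar>^n / fact n * norm ((f^^n) x)"
      by (simp add: power_abs)
    also have "\<dots> \<le> \<bar>t\<bar>^n / fact n * (K^n * norm x)"
      by (intro mult_left_mono K(2)) auto
    also have "\<dots> = norm x * (inverse (fact n) * (\<bar>t\<bar> * K)^n)"
      by (simp add: power_mult_distrib field_simps)
    finally show "norm (norm ((t^n / fact n) *\<^sub>R (f^^n) x)) \<le> norm x * (inverse (fact n) * (\<bar>t\<bar> * K)^n)" .
  qed
qed

lemma summable_series:
  fixes f :: "'a::banach \<Rightarrow> 'a"
  assumes "bounded_linear f"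
  shows "summable (\<lambda>n. (t^n / fact n) *\<^sub>R (f^^n) x)"
  using summable_norm_cancel[OF summable_norm_series[OF assms]] .

lemma binom_iter:
  fixes g f :: "'a::real_vector \<Rightarrow> 'a"
  assumes lin: "linear g" and fg: "\<And>x. f x = g x - c *\<^sub>R x"
  shows "(f^^n) x = (\<Sum>k\<le>n. (real (n choose k) * (-c)^(n-k)) *\<^sub>R (g^^k) x)"
proof (induction n)
  case 0 then show ?case by simp
next
  case (Suc n)
  define a where "a = (\<lambda>n k. real (n choose k) * (-c)^(n-k))"
  have "(f^^Suc n) x = g (\<Sum>k\<le>n. a n k *\<^sub>R (g^^k) x) - c *\<^sub>R (\<Sum>k\<le>n. a n k *\<^sub>R (g^^k) x)"
  proof -
    have "(f^^Suc n) x = f ((f^^n) x)" by simp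
    also have "\<dots> = g ((f^^n) x) - c *\<^sub>R (f^^n) x" by (rule fg)
    finally show ?thesis by (simp only: Suc.IH a_def)
  qed
  also have "g (\<Sum>k\<le>n. a n k *\<^sub>R (g^^k) x) = (\<Sum>k\<le>n. a n k *\<^sub>R (g^^Suc k) x)"
    by (simp add: linear_sum[OF lin] linear_scale[OF lin])
  also have "\<dots> = (\<Sum>k\<le>Suc n. (if k = 0 then 0 else a n (k - 1)) *\<^sub>R (g^^k) x)"
    by (subst sum.atMost_Suc_shift) simp
  also have "c *\<^sub>R (\<Sum>k\<le>n. a n k *\<^sub>R (g^^k) x) = (\<Sum>k\<le>Suc n. (if k = Suc n then 0 else c * a n k) *\<^sub>R (g^^k) x)"
    by (simp add: scaleR_right.sum)
  also have "(\<Sum>k\<le>Suc n. (if k = 0 then 0 else a n (k - 1)) *\<^sub>R (g^^k) x) - (\<Sum>k\<le>Suc n. (if k = Suc n then 0 else c * a n k) *\<^sub>R (g^^k) x)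
     = (\<Sum>k\<le>Suc n. a (Suc n) k *\<^sub>R (g^^k) x)"
    unfolding sum_subtractf[symmetric]
  proof (rule sum.cong[OF refl])
    fix k assume k: "k \<in> {..Suc n}"
    have "(if k = 0 then 0 else a n (k - 1)) - (if k = Suc n then 0 else c * a n k) = a (Suc n) k"
    proof (cases k)
      case 0 then show ?thesis by (simp add: a_def)
    next
      case (Suc m)
      show ?thesis
      proof (cases "k = Suc n")
        case True then show ?thesis using Suc by (simp add: a_def)
      next
        case False
        then have "m < n" using k Suc by auto
        then have "Suc n - k = Suc (n - k)" using Suc by simp
        then show ?thesis using Suc \<open>m < n\<close> by (simp add: a_def algebra_simps)
      qed
    qed
    then show "(if k = 0 then 0 else a n (k - 1)) *\<^sub>R (g^^k) x - (if k = Suc n then 0 else c * a n k) *\<^sub>R (g^^k) x = a (Suc n) k *\<^sub>R (g^^k) x"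
      by (simp add: scaleR_left_diff_distrib[symmetric])
  qed
  finally show ?case by (simp add: a_def)
qed


lemma classical_stoch:
  fixes Q :: "real^'n^'n" and p :: "real^'n" and t :: real
  assumes off: "\<And>j k. j \<noteq> k \<Longrightarrow> Q$j$k \<ge> 0"
    and col: "\<And>k. (\<Sum>j\<in>UNIV. Q$j$k) = 0"
    and pnn: "\<And>j. p$j \<ge> 0" and psum: "(\<Sum>j\<in>UNIV. p$j) = 1" and t: "t \<ge> 0"
  shows "summable (\<lambda>n. (t^n / fact n) *\<^sub>R (((*v) Q)^^n) p)"
    and "\<And>j. (\<Sum>n. (t^n / fact n) *\<^sub>R (((*v) Q)^^n) p) $ j \<ge> 0"
    and "(\<Sum>j\<in>UNIV. (\<Sum>n. (t^n / fact n) *\<^sub>R (((*v) Q)^^n) p) $ j) = 1"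
proof -
  define f where "f = (*v) Q"
  have bf: "bounded_linear f" unfolding f_def by simp
  show sm: "summable (\<lambda>n. (t^n / fact n) *\<^sub>R (((*v) Q)^^n) p)"
    using summable_series[OF bf] unfolding f_def .
  have compsum: "(\<Sum>j\<in>UNIV. ((f^^n) p)$j) = (if n = 0 then 1 else 0)" for n
  proof (cases n)
    case 0 then show ?thesis using psum by simp
  next
    case (Suc m)
    have "(\<Sum>j\<in>UNIV. (Q *v y)$j) = 0" for y
    proof -
      have "(\<Sum>j\<in>UNIV. (Q *v y)$j) = (\<Sum>j\<in>UNIV. \<Sum>k\<in>UNIV. Q$j$k * y$k)"
        by (simp add: matrix_vector_mult_def)
      also have "\<dots> = (\<Sum>k\<in>UNIV. (\<Sum>j\<in>UNIV. Q$j$k) * y$k)"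
        by (subst sum.swap) (simp add: sum_distrib_right)
      also have "\<dots> = 0" using col by simp
      finally show ?thesis .
    qed
    then show ?thesis using Suc by (simp add: f_def)
  qed
  show "(\<Sum>j\<in>UNIV. (\<Sum>n. (t^n / fact n) *\<^sub>R (((*v) Q)^^n) p) $ j) = 1"
  proof -
    have "(\<Sum>j\<in>UNIV. (\<Sum>n. (t^n / fact n) *\<^sub>R (((*v) Q)^^n) p) $ j)
        = (\<Sum>j\<in>UNIV. \<Sum>n. ((t^n / fact n) *\<^sub>R (((*v) Q)^^n) p) $ j)"
      using bounded_linear.suminf[OF bounded_linear_vec_nth sm] by simp
    also have "\<dots> = (\<Sum>n. \<Sum>j\<in>UNIV. ((t^n / fact n) *\<^sub>R (((*v) Q)^^n) p) $ j)"
      by (rule suminf_sum[symmetric]) (rule bounded_linear.summable[OF bounded_linear_vec_nth sm])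
    also have "\<dots> = (\<Sum>n. (t^n / fact n) * (\<Sum>j\<in>UNIV. ((((*v) Q)^^n) p) $ j))"
      by (simp add: sum_distrib_left)
    also have "\<dots> = (\<Sum>n. if n = 0 then 1 else 0)"
      using compsum by (intro suminf_cong) (simp add: f_def)
    also have "\<dots> = 1" using sums_unique[OF sums_single[of 0 "\<lambda>_. 1::real"]] by simp
    finally show ?thesis .
  qed
  fix i
  define c where "c = (\<Sum>k\<in>UNIV. \<bar>Q$k$k\<bar>)"
  have c0: "c \<ge> 0" unfolding c_def by (simp add: sum_nonneg)
  have ck: "Q$k$k + c \<ge> 0" for k
  proof -
    have "\<bar>Q$k$k\<bar> \<le> c" unfolding c_def by (rule member_le_sum) auto
    then show ?thesis by linarith
  qed
  define M where "M = Q + mat c"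
  define g where "g = (*v) M"
  have bg: "bounded_linear g" unfolding g_def by simp
  have Mnn: "M$j$k \<ge> 0" for j k
    using off[of j k] ck[of k] by (cases "j = k") (auto simp: M_def mat_def)
  have matc: "mat c *v x = c *\<^sub>R x" for x :: "real^'n"
  proof -
    have "(\<Sum>j\<in>UNIV. (if i = j then c else 0) * x$j) = c * x$i" for i
    proof -
      have "(\<Sum>j\<in>UNIV. (if i = j then c else 0) * x$j) = (\<Sum>j\<in>UNIV. if i = j then c * x$i else 0)"
        by (rule sum.cong) auto
      then show ?thesis by simp
    qed
    then show ?thesis by (simp add: vec_eq_iff matrix_vector_mult_def mat_def)
  qed
  have fg: "f x = g x - c *\<^sub>R x" for x
    using matc[of x] by (simp add: f_def g_def M_def matrix_vector_mult_add_rdistrib)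
  have gnn: "((g^^k) p)$j \<ge> 0" for k j
  proof (induction k arbitrary: j)
    case 0 then show ?case using pnn by simp
  next
    case (Suc k)
    show ?case using Suc Mnn by (simp add: g_def matrix_vector_mult_def sum_nonneg)
  qed
  define u where "u = (\<lambda>k. (t^k / fact k) * ((g^^k) p)$i)"
  define w where "w = (\<lambda>m::nat. (-c*t)^m / fact m)"
  have lin: "linear g" using bg bounded_linear.linear by blast
  have ct: "(-c*t)^m = t^m * (-c)^m" for m
    by (metis mult.commute power_mult_distrib)
  have trm: "((t^n / fact n) *\<^sub>R (f^^n) p)$i = (\<Sum>k\<le>n. u k * w (n - k))" for n
  proof -
    have "((t^n / fact n) *\<^sub>R (f^^n) p)$i
        = (\<Sum>k\<le>n. (t^n / fact n) * (real (n choose k) * (-c)^(n-k)) * ((g^^k) p)$i)"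
      by (simp add: binom_iter[OF lin fg] sum_distrib_left mult.assoc)
    also have "\<dots> = (\<Sum>k\<le>n. u k * w (n - k))"
    proof (rule sum.cong[OF refl])
      fix k assume "k \<in> {..n}"
      then have kn: "k \<le> n" by simp
      have tn: "t^n = t^k * t^(n-k)" using kn by (simp flip: power_add)
      show "(t^n / fact n) * (real (n choose k) * (-c)^(n-k)) * ((g^^k) p)$i = u k * w (n - k)"
        unfolding u_def w_def binomial_fact[OF kn] tn ct
        by (simp add: field_simps)
    qed
    finally show ?thesis .
  qed
  have su: "summable (\<lambda>k. norm (u k))"
  proof (rule summable_comparison_test[OF _ summable_norm_series[OF bg, of t p]], intro exI allI impI)
    fix k :: nat
    have "norm (norm (u k)) = \<bar>((t^k / fact k) *\<^sub>R (g^^k) p)$i\<bar>" by (simp add: u_def)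
    also have "\<dots> \<le> norm ((t^k / fact k) *\<^sub>R (g^^k) p)" by (rule component_le_norm_cart)
    finally show "norm (norm (u k)) \<le> norm ((t^k / fact k) *\<^sub>R (g^^k) p)" .
  qed
  have sw: "summable (\<lambda>m. norm (w m))"
    using summable_norm_exp[of "-c*t"] by (simp add: w_def divide_inverse mult.commute)
  have wexp: "(\<Sum>m. w m) = exp (-c*t)"
    using sums_unique[OF exp_converges[of "-c*t"]] by (simp add: w_def divide_inverse mult.commute)
  have unn: "(\<Sum>k. u k) \<ge> 0"
    by (rule suminf_nonneg[OF summable_norm_cancel[OF su]]) (simp add: u_def gnn t)
  have "(\<Sum>n. (t^n / fact n) *\<^sub>R (((*v) Q)^^n) p) $ i = (\<Sum>n. ((t^n / fact n) *\<^sub>R (f^^n) p)$i)"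
    using bounded_linear.suminf[OF bounded_linear_vec_nth sm] by (simp add: f_def)
  also have "\<dots> = (\<Sum>n. \<Sum>k\<le>n. u k * w (n - k))" using trm by simp
  also have "\<dots> = (\<Sum>k. u k) * (\<Sum>m. w m)" by (rule Cauchy_product[OF su sw, symmetric])
  also have "\<dots> \<ge> 0" using unn wexp by simp
  finally show "(\<Sum>n. (t^n / fact n) *\<^sub>R (((*v) Q)^^n) p) $ i \<ge> 0" .
qed


definition UU :: "('n \<Rightarrow> complex^'n) \<Rightarrow> complex^'n^'n" where
  "UU e = (\<chi> i j. e j $ i)"

definition mm :: "('n \<Rightarrow> complex^'n) \<Rightarrow> complex^'n^'n \<Rightarrow> 'n \<Rightarrow> 'n \<Rightarrow> complex" where
  "mm e X j k = braket (e j) (X *v e k)"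

lemma cadj_cadj[simp]: "cadj (cadj A) = A"
  by (simp add: cadj_def vec_eq_iff)

lemma cadj_mult: "cadj (A ** B) = cadj B ** cadj A"
  by (simp add: cadj_def vec_eq_iff matrix_matrix_mult_def mult.commute)

lemma UU_left: assumes "orthonormal_basis e" shows "cadj (UU e) ** UU e = mat 1"
proof -
  have "(\<Sum>l\<in>UNIV. cnj (e j $ l) * e k $ l) = (if j = k then 1 else 0)" for j k
    using assms unfolding orthonormal_basis_def braket_def by metis
  then show ?thesis
    by (simp add: vec_eq_iff matrix_matrix_mult_def cadj_def UU_def mat_def)
qed

lemma UU_right: assumes "orthonormal_basis e" shows "UU e ** cadj (UU e) = mat 1"
  using UU_left[OF assms] matrix_left_right_inverse by blast

lemma mm_W: "mm e X j k = (cadj (UU e) ** X ** UU e) $ j $ k"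
  by (simp add: mm_def braket_def matrix_matrix_mult_def matrix_vector_mult_def cadj_def UU_def
      sum_distrib_left sum_distrib_right mult.assoc) (rule sum.swap)

lemma mm_mult: assumes "orthonormal_basis e"
  shows "mm e (X ** Y) j k = (\<Sum>l\<in>UNIV. mm e X j l * mm e Y l k)"
proof -
  have "cadj (UU e) ** (X ** Y) ** UU e = cadj (UU e) ** (X ** (UU e ** cadj (UU e)) ** Y) ** UU e"
    using UU_right[OF assms] by simp
  also have "\<dots> = (cadj (UU e) ** X ** UU e) ** (cadj (UU e) ** Y ** UU e)"
    by (simp add: matrix_mul_assoc)
  finally show ?thesis unfolding mm_W by (simp add: matrix_matrix_mult_def)
qed

lemma mm_cadj: "mm e (cadj X) j k = cnj (mm e X k j)"
proof -
  have "cadj (UU e) ** cadj X ** UU e = cadj (cadj (UU e) ** X ** UU e)"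
    by (simp add: cadj_mult matrix_mul_assoc)
  then show ?thesis unfolding mm_W by (simp add: cadj_def)
qed

lemma mm_ext: assumes "orthonormal_basis e" and "\<And>j k. mm e X j k = mm e Y j k" shows "X = Y"
proof -
  have W: "cadj (UU e) ** X ** UU e = cadj (UU e) ** Y ** UU e"
    using assms(2) unfolding mm_W by (simp add: vec_eq_iff)
  have "X = UU e ** (cadj (UU e) ** X ** UU e) ** cadj (UU e)" for X
  proof -
    have "UU e ** (cadj (UU e) ** X ** UU e) ** cadj (UU e)
       = (UU e ** cadj (UU e)) ** X ** (UU e ** cadj (UU e))"
      by (simp add: matrix_mul_assoc)
    then show ?thesis using UU_right[OF assms(1)] by simp
  qed
  then show ?thesis using W by metis
qed

lemma mv_scaleR: "(r *\<^sub>R (X::complex^_^_)) *v v = r *\<^sub>R (X *v v)"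
  by (simp add: vec_eq_iff matrix_vector_mult_def scaleR_right.sum mult_scaleR_left)

lemma mm_linear: "linear (\<lambda>X. mm e X j k)"
proof (rule linearI)
  show "mm e (X + Y) j k = mm e X j k + mm e Y j k" for X Y
    by (simp add: mm_def braket_def matrix_vector_mult_add_rdistrib distrib_left sum.distrib)
  show "mm e (r *\<^sub>R X) j k = r *\<^sub>R mm e X j k" for r X
    by (simp add: mm_def braket_def mv_scaleR scaleR_right.sum)
qed

lemma mm_sum: "mm e (\<Sum>a\<in>A. F a) j k = (\<Sum>a\<in>A. mm e (F a) j k)"
  by (rule linear_sum[OF mm_linear])
lemma mm_add: "mm e (X + Y) j k = mm e X j k + mm e Y j k"
  by (rule linear_add[OF mm_linear])
lemma mm_diff: "mm e (X - Y) j k = mm e X j k - mm e Y j k"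
  by (rule linear_diff[OF mm_linear])
lemma mm_scaleR: "mm e (r *\<^sub>R X) j k = of_real r * mm e X j k"
  using linear_scale[OF mm_linear] by (simp add: scaleR_conv_of_real)

lemma ketbra_mv: "ketbra a b *v v = braket b v *s a"
  by (simp add: ketbra_def braket_def vec_eq_iff matrix_vector_mult_def sum_distrib_left mult.commute mult.left_commute)

lemma braket_smult: "braket v (c *s w) = c * braket v w"
  by (simp add: braket_def sum_distrib_left mult.left_commute)

lemma mm_ketbra: assumes "orthonormal_basis e"
  shows "mm e (ketbra (e a) (e b)) j k = (if j = a \<and> k = b then 1 else 0)"
  using assms by (simp add: mm_def ketbra_mv braket_smult orthonormal_basis_def)

definition RR :: "('n \<Rightarrow> complex^'n) \<Rightarrow> real^'n \<Rightarrow> complex^'n^'n" where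
  "RR e s = (\<Sum>j\<in>UNIV. s$j *\<^sub>R ketbra (e j) (e j))"

lemma RR_linear: "linear (RR e)"
  by (rule linearI) (simp_all add: RR_def scaleR_add_left sum.distrib scaleR_right.sum)

lemma mm_RR: assumes "orthonormal_basis e"
  shows "mm e (RR e s) j k = (if j = k then of_real (s$j) else 0)"
  by (cases "j = k") (auto simp: RR_def mm_sum mm_scaleR mm_ketbra[OF assms] if_distrib intro!: sum.neutral cong: if_cong)

lemma csmat_of_real: "csmat (of_real r) X = r *\<^sub>R X"
proof -
  have "(r *\<^sub>R X)$i$k = of_real r * X$i$k" for i k
  proof -
    have "(r *\<^sub>R X)$i$k = r *\<^sub>R X$i$k" by simp
    also have "\<dots> = of_real r * X$i$k" by (rule scaleR_conv_of_real)
    finally show ?thesis .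
  qed
  then show ?thesis by (simp add: csmat_def vec_eq_iff del: scaleR_conv_of_real)
qed

lemma G0_RR: assumes "orthonormal_basis e" shows "G0 e (RR e s) = RR e s"
proof -
  have "G0 e (RR e s) = (\<Sum>j\<in>UNIV. csmat (of_real (s$j)) (ketbra (e j) (e j)))"
    unfolding G0_def using mm_RR[OF assms, of s] by (simp add: mm_def)
  then show ?thesis by (simp add: csmat_of_real RR_def)
qed


lemma zcnj: "z * cnj z = complex_of_real (cmod z) ^ 2"
  by (metis complex_norm_square of_real_power)
lemma cnjz: "cnj z * z = complex_of_real (cmod z) ^ 2"
  by (metis zcnj mult.commute)

lemma sum_delta_r: "(\<Sum>l\<in>(UNIV::'a::finite set). f l * (if l = k then g l else 0)) = f k * (g k :: 'b::comm_ring_1)"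
proof -
  have "(\<Sum>l\<in>UNIV. f l * (if l = k then g l else 0)) = (\<Sum>l\<in>UNIV. if l = k then f k * g k else 0)"
    by (rule sum.cong) auto
  then show ?thesis by simp
qed

lemma sum_delta_l: "(\<Sum>l\<in>(UNIV::'a::finite set). (if j = l then g j else 0) * f l) = g j * (f j :: 'b::comm_ring_1)"
proof -
  have "(\<Sum>l\<in>UNIV. (if j = l then g j else 0) * f l) = (\<Sum>l\<in>UNIV. if l = j then g j * f j else 0)"
    by (rule sum.cong) auto
  then show ?thesis by simp
qed

definition QQ :: "('n \<Rightarrow> complex^'n) \<Rightarrow> 'a set \<Rightarrow> ('a \<Rightarrow> complex^'n^'n) \<Rightarrow> real^'n^'n" where
  "QQ e A h = (\<chi> j k. \<Sum>a\<in>A. (cmod (mm e (h a) j k))^2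
      - (if j = k then (\<Sum>i\<in>UNIV. (cmod (mm e (h a) i j))^2) else 0))"

lemma mm_D_RR: assumes on: "orthonormal_basis e"
  shows "mm e (dissipator A h (RR e s)) j j = of_real ((QQ e A h *v s)$j)"
proof -
  define N where "N = (\<lambda>a. \<Sum>i\<in>UNIV. (cmod (mm e (h a) i j))^2)"
  have a1: "mm e (h a ** RR e s ** cadj (h a)) j j = of_real (\<Sum>l\<in>UNIV. (cmod (mm e (h a) j l))^2 * s$l)" for a
  proof -
    have "mm e (h a ** RR e s ** cadj (h a)) j j
        = (\<Sum>l\<in>UNIV. (\<Sum>l'\<in>UNIV. mm e (h a) j l' * (if l' = l then of_real (s$l') else 0)) * cnj (mm e (h a) j l))"
      by (simp add: mm_mult[OF on] mm_cadj mm_RR[OF on])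
    also have "\<dots> = (\<Sum>l\<in>UNIV. of_real ((cmod (mm e (h a) j l))^2 * s$l))"
      by (simp only: sum_delta_r) (simp add: zcnj mult_ac)
    finally show ?thesis by simp
  qed
  have hh: "mm e (cadj (h a) ** h a) j j = of_real (N a)" for a
    by (simp add: mm_mult[OF on] mm_cadj N_def cnjz)
  have a2: "mm e (cadj (h a) ** h a ** RR e s) j j = of_real (N a * s$j)" for a
  proof -
    have "mm e (cadj (h a) ** h a ** RR e s) j j
        = (\<Sum>l\<in>UNIV. mm e (cadj (h a) ** h a) j l * (if l = j then of_real (s$l) else 0))"
      by (simp add: mm_mult[OF on] mm_RR[OF on] del: mm_cadj)
    then show ?thesis by (simp only: sum_delta_r hh) simp
  qed
  have a3: "mm e (RR e s ** (cadj (h a) ** h a)) j j = of_real (N a * s$j)" for a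
  proof -
    have "mm e (RR e s ** (cadj (h a) ** h a)) j j
        = (\<Sum>l\<in>UNIV. (if j = l then of_real (s$j) else 0) * mm e (cadj (h a) ** h a) l j)"
      by (subst mm_mult[OF on]) (simp add: mm_RR[OF on] del: mm_cadj)
    then show ?thesis
      using sum_delta_l[of j "\<lambda>_. complex_of_real (s$j)" "\<lambda>l. mm e (cadj (h a) ** h a) l j"] hh
      by (simp add: mult.commute)
  qed
  have "mm e (dissipator A h (RR e s)) j j
      = (\<Sum>a\<in>A. of_real ((\<Sum>l\<in>UNIV. (cmod (mm e (h a) j l))^2 * s$l) - N a * s$j))"
    unfolding dissipator_def mm_sum mm_diff mm_scaleR mm_add a1 a2 a3
    by (intro sum.cong refl) (simp add: algebra_simps)
  also have "\<dots> = of_real ((QQ e A h *v s)$j)"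
  proof -
    have "(QQ e A h *v s)$j = (\<Sum>k\<in>UNIV. \<Sum>a\<in>A. ((cmod (mm e (h a) j k))^2
      - (if j = k then N a else 0)) * s$k)"
      unfolding N_def by (simp add: QQ_def matrix_vector_mult_def sum_distrib_right)
    also have "\<dots> = (\<Sum>a\<in>A. \<Sum>k\<in>UNIV. (cmod (mm e (h a) j k))^2 * s$k - (if j = k then N a else 0) * s$k)"
      by (subst sum.swap) (simp add: algebra_simps)
    also have "\<dots> = (\<Sum>a\<in>A. (\<Sum>l\<in>UNIV. (cmod (mm e (h a) j l))^2 * s$l) - N a * s$j)"
      using sum_delta_l[of j "\<lambda>_. N _" "\<lambda>k. s$k"] by (simp add: sum_subtractf)
    finally show ?thesis by simp
  qed
  finally show ?thesis .
qed


lemma madd_rdistrib: "((B + C) ** A) = (B ** A) + (C ** (A::complex^'n^'n))"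
  by (vector matrix_matrix_mult_def sum.distrib[symmetric] field_simps)

lemma mult_sum_right: "(A::complex^'n^'n) ** (\<Sum>j\<in>S. M j) = (\<Sum>j\<in>S. A ** M j)"
  by (induction S rule: infinite_finite_induct) (simp_all add: matrix_add_ldistrib)

lemma mult_sum_left: "(\<Sum>j\<in>S. M j) ** (A::complex^'n^'n) = (\<Sum>j\<in>S. M j ** A)"
  by (induction S rule: infinite_finite_induct) (simp_all add: madd_rdistrib)

lemma mv_sum_left: "(\<Sum>j\<in>S. M j) *v (v::complex^'n) = (\<Sum>j\<in>S. M j *v v)"
  by (induction S rule: infinite_finite_induct) (simp_all add: matrix_vector_mult_add_rdistrib)

lemma mult_scaleR_right': "(A::complex^'n^'n) ** (r *\<^sub>R M) = r *\<^sub>R (A ** M)"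
  by (simp add: vec_eq_iff matrix_matrix_mult_def scaleR_right.sum)

lemma mult_scaleR_left': "(r *\<^sub>R M) ** (A::complex^'n^'n) = r *\<^sub>R (M ** A)"
  by (simp add: vec_eq_iff matrix_matrix_mult_def scaleR_right.sum)

lemma H_ketbra: "H ** ketbra a b = ketbra (H *v a) b"
  by (simp add: vec_eq_iff matrix_matrix_mult_def ketbra_def matrix_vector_mult_def sum_distrib_right mult.assoc)

lemma ketbra_H: "ketbra a b ** H = ketbra a (cadj H *v b)"
  by (simp add: vec_eq_iff matrix_matrix_mult_def ketbra_def matrix_vector_mult_def cadj_def sum_distrib_left mult_ac)

lemma ketbra_real_l: "ketbra (complex_of_real c *s a) b = c *\<^sub>R ketbra a b"
  by (simp add: vec_eq_iff ketbra_def scaleR_conv_of_real[where 'a=complex] mult.assoc)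

lemma ketbra_real_r: "ketbra a (complex_of_real c *s b) = c *\<^sub>R ketbra a b"
  by (simp add: vec_eq_iff ketbra_def scaleR_conv_of_real[where 'a=complex] mult_ac)

lemma RR_commute:
  assumes "hermitian H" and "\<And>j. H *v e j = complex_of_real (E j) *s e j"
  shows "H ** RR e s = RR e s ** H"
proof -
  have "H ** ketbra (e j) (e j) = ketbra (e j) (e j) ** H" for j
    using assms unfolding hermitian_def by (simp add: H_ketbra ketbra_H ketbra_real_l ketbra_real_r)
  then show ?thesis
    by (simp add: RR_def mult_sum_right mult_sum_left mult_scaleR_right' mult_scaleR_left')
qed

lemma cnj_braket: "cnj (braket v w) = braket w v"
  by (simp add: braket_def mult.commute)

lemma braket_sum: "braket v (\<Sum>j\<in>S. w j) = (\<Sum>j\<in>S. braket v (w j))"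
  by (simp add: braket_def sum_distrib_left) (rule sum.swap)

lemma braket_scaleR: "braket v (r *\<^sub>R w) = complex_of_real r * braket v w"
  by (simp add: braket_def sum_distrib_left scaleR_conv_of_real[where 'a=complex] mult_ac)

lemma RR_quad: "braket v (RR e s *v v) = complex_of_real (\<Sum>j\<in>UNIV. s$j * (cmod (braket (e j) v))^2)"
proof -
  have "braket v (RR e s *v v) = (\<Sum>j\<in>UNIV. complex_of_real (s$j) * (braket (e j) v * braket v (e j)))"
    by (simp add: RR_def mv_sum_left mv_scaleR braket_sum braket_scaleR ketbra_mv braket_smult mult_ac)
  also have "\<dots> = (\<Sum>j\<in>UNIV. complex_of_real (s$j * (cmod (braket (e j) v))^2))"
  proof -
    have "braket v (e j) = cnj (braket (e j) v)" for j by (simp add: cnj_braket)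
    then show ?thesis by (simp only: zcnj of_real_mult of_real_power)
  qed
  finally show ?thesis by simp
qed

lemma RR_hermitian: "hermitian (RR e s)"
  unfolding hermitian_def
  by (simp add: RR_def cadj_def vec_eq_iff ketbra_def cnj_sum mult.commute)

lemma RR_trace: assumes "orthonormal_basis e"
  shows "trace (RR e s) = complex_of_real (\<Sum>j\<in>UNIV. s$j)"
proof -
  have "trace (RR e s) = (\<Sum>j\<in>UNIV. complex_of_real (s$j) * braket (e j) (e j))"
    unfolding trace_def RR_def
    by (simp add: ketbra_def braket_def scaleR_conv_of_real[where 'a=complex] sum_distrib_left mult_ac) (rule sum.swap)
  then show ?thesis using assms by (simp add: orthonormal_basis_def)
qed

lemma RR_density: assumes "orthonormal_basis e" "\<And>j. s$j \<ge> 0" "(\<Sum>j\<in>UNIV. s$j) = 1"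
  shows "density_matrix (RR e s)"
proof -
  have "(\<Sum>x\<in>UNIV. complex_of_real (s$x)) = 1" using assms(3) by (metis of_real_1 of_real_sum)
  then show ?thesis using RR_hermitian RR_trace[OF assms(1)] assms(2,3)
    by (simp add: density_matrix_def psd_def RR_quad sum_nonneg)
qed


lemma QQ_off: "j \<noteq> k \<Longrightarrow> QQ e A h $ j $ k \<ge> 0"
  by (simp add: QQ_def sum_nonneg)

lemma QQ_col: "(\<Sum>j\<in>UNIV. QQ e A h $ j $ k) = 0"
proof -
  have "(\<Sum>j\<in>UNIV. QQ e A h $ j $ k) = (\<Sum>a\<in>A. \<Sum>j\<in>UNIV. (cmod (mm e (h a) j k))^2
      - (if j = k then (\<Sum>i\<in>UNIV. (cmod (mm e (h a) i j))^2) else 0))"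
    by (simp add: QQ_def) (rule sum.swap)
  also have "\<dots> = 0"
    by (rule sum.neutral) (simp add: sum_subtractf)
  finally show ?thesis .
qed

lemma L_RR: assumes on: "orthonormal_basis e"
  shows "(G0 e \<circ> dissipator A h \<circ> G0 e) (RR e s) = RR e (QQ e A h *v s)"
proof -
  have "(G0 e \<circ> dissipator A h \<circ> G0 e) (RR e s) = G0 e (dissipator A h (RR e s))"
    by (simp add: G0_RR[OF on])
  also have "\<dots> = (\<Sum>j\<in>UNIV. csmat (complex_of_real ((QQ e A h *v s)$j)) (ketbra (e j) (e j)))"
    unfolding G0_def using mm_D_RR[OF on, of A h s] by (simp add: mm_def)
  also have "\<dots> = RR e (QQ e A h *v s)"
    by (simp add: csmat_of_real RR_def)
  finally show ?thesis .
qed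

lemma L_iter: assumes on: "orthonormal_basis e"
  shows "((G0 e \<circ> dissipator A h \<circ> G0 e) ^^ n) (RR e s) = RR e ((((*v) (QQ e A h)) ^^ n) s)"
proof (induction n)
  case 0 then show ?case by simp
next
  case (Suc n)
  have "((G0 e \<circ> dissipator A h \<circ> G0 e) ^^ Suc n) (RR e s)
      = (G0 e \<circ> dissipator A h \<circ> G0 e) (((G0 e \<circ> dissipator A h \<circ> G0 e) ^^ n) (RR e s))"
    by (simp only: funpow.simps o_apply)
  also have "\<dots> = RR e ((((*v) (QQ e A h)) ^^ Suc n) s)"
    by (simp only: Suc.IH L_RR[OF on]) simp
  finally show ?case .
qed


lemma mm_H: assumes on: "orthonormal_basis e" and eig: "\<And>j. H *v e j = complex_of_real (E j) *s e j"
  shows "mm e H j l = (if j = l then complex_of_real (E j) else 0)"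
  using on by (simp add: mm_def eig braket_smult orthonormal_basis_def)

theorem lemma4:
  fixes H :: "complex^'n^'n"
    and e :: "'n \<Rightarrow> complex^'n"
    and E :: "'n \<Rightarrow> real"
    and A :: "'a set"
    and h :: "'a \<Rightarrow> complex^'n^'n"
    and \<rho> :: "complex^'n^'n"
    and t :: real
  assumes "hermitian H"
    and "orthonormal_basis e"
    and "\<And>j. H *v e j = complex_of_real (E j) *s e j"
    and "inj E"
    and "finite A"
    and "density_matrix \<rho>"
    and "H ** \<rho> = \<rho> ** H"
    and "t \<ge> 0"
  shows "density_matrix (super_exp t (G0 e \<circ> dissipator A h \<circ> G0 e) \<rho>)
       \<and> H ** super_exp t (G0 e \<circ> dissipator A h \<circ> G0 e) \<rho>
         = super_exp t (G0 e \<circ> dissipator A h \<circ> G0 e) \<rho> ** H"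
proof -
  note on = assms(2) and eig = assms(3)
  have off: "mm e \<rho> j k = 0" if "j \<noteq> k" for j k
  proof -
    have "mm e (H ** \<rho>) j k = (\<Sum>l\<in>UNIV. (if j = l then complex_of_real (E j) else 0) * mm e \<rho> l k)"
      by (simp add: mm_mult[OF on] mm_H[OF on eig])
    also have "\<dots> = complex_of_real (E j) * mm e \<rho> j k" by (rule sum_delta_l)
    finally have 1: "mm e (H ** \<rho>) j k = complex_of_real (E j) * mm e \<rho> j k" .
    have "mm e (\<rho> ** H) j k = (\<Sum>l\<in>UNIV. mm e \<rho> j l * (if l = k then complex_of_real (E l) else 0))"
      by (simp add: mm_mult[OF on] mm_H[OF on eig])
    also have "\<dots> = mm e \<rho> j k * complex_of_real (E k)" by (rule sum_delta_r)
    finally have 2: "mm e (\<rho> ** H) j k = mm e \<rho> j k * complex_of_real (E k)" .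
    have "E j \<noteq> E k" using assms(4) that by (meson injD)
    then show ?thesis using 1 2 assms(7) by (simp add: mult.commute)
  qed
  define p where "p = (\<chi> j. Re (mm e \<rho> j j))"
  have psd: "psd \<rho>" and tr: "trace \<rho> = 1" using assms(6) by (auto simp: density_matrix_def)
  have diag: "mm e \<rho> j j = complex_of_real (p$j)" for j
    using psd unfolding psd_def p_def mm_def by (simp add: complex_eq_iff)
  have pnn: "p$j \<ge> 0" for j
    using psd unfolding psd_def p_def mm_def by simp
  have rho: "\<rho> = RR e p"
    by (rule mm_ext[OF on]) (simp add: mm_RR[OF on] diag off)
  have psum: "(\<Sum>j\<in>UNIV. p$j) = 1"
    using tr RR_trace[OF on, of p] rho by (metis of_real_eq_1_iff)
  define Q where "Q = QQ e A h"
  define s where "s = (\<Sum>n. (t^n / fact n) *\<^sub>R (((*v) Q)^^n) p)"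
  have off': "\<And>j k. j \<noteq> k \<Longrightarrow> Q$j$k \<ge> 0" unfolding Q_def by (rule QQ_off)
  have col': "\<And>k. (\<Sum>j\<in>UNIV. Q$j$k) = 0" unfolding Q_def by (rule QQ_col)
  note cs = classical_stoch[OF off' col' pnn psum assms(8), folded s_def]
  have bl: "bounded_linear (RR e)"
    using RR_linear linear_conv_bounded_linear by blast
  have "super_exp t (G0 e \<circ> dissipator A h \<circ> G0 e) \<rho>
      = (\<Sum>n. RR e ((t^n / fact n) *\<^sub>R (((*v) Q)^^n) p))"
    unfolding super_exp_def rho L_iter[OF on] Q_def
    by (simp add: linear_scale[OF RR_linear])
  also have "\<dots> = RR e s"
    unfolding s_def by (rule bounded_linear.suminf[OF bl cs(1), symmetric])
  finally have se: "super_exp t (G0 e \<circ> dissipator A h \<circ> G0 e) \<rho> = RR e s" .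
  have d: "density_matrix (RR e s)"
    by (rule RR_density[OF assms(2)]) (use cs in auto)
  have c: "H ** RR e s = RR e s ** H"
    by (rule RR_commute[of H e E s, OF assms(1) assms(3)])
  show ?thesis unfolding se using d c by blast
qed

end
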